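(* Let $F_1,\dots,F_n:\mathbb{R}^d\to\mathbb{R}^d$, $F=\frac1n\sum_iF_i$, $F(x^* )=0$; assume $F$ is $L$-Lipschitz and $\mu$-quasi strongly monotone, and that the Expected Residual condition holds with parameter $\delta>0$ for $g=F_v$, $v\sim\mathcal D$; let $\sigma_*^2=\mathbb{E}\|F_v(x^* )\|^2<\infty$. Let $\bar\omega:=\min\{\frac1{4L},\frac{\mu}{18\delta}\}$, $k^*:=\lceil\frac{4}{\mu\bar\omega}\rceil$, and $$\gamma_k=\omega_k:=\begin{cases}\bar\omega,&k\le k^*,\\ \frac{2k+1}{(k+1)^2}\cdot\frac2\mu,&k>k^*.\end{cases}$$ Then for all $K\ge k^*$, the iterates of SPEG with these step-sizes satisfy $$R_K^2\le\Big(\frac{k^*}{K}\Big)^2\frac{R_0^2}{\exp(2)}+\frac{192\sigma_*^2}{\mu^2K},$$ where $R_K^2:=\mathbb{E}\big[\|x_K-x^*\|^2+\|x_K-\hat x_{K-1}\|^2\big]$.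
   Context: $L$-Lipschitz: $\|F(x)-F(y)\|\le L\|x-y\|$. $\mu$-quasi strongly monotone ($\mu>0$): $\langle F(x),x-x^*\rangle\ge\mu\|x-x^*\|^2$ for all $x$. A sampling distribution $\mathcal D$ is a distribution of a random $v\in\mathbb{R}^n_+$ with $\mathbb{E}[v_i]=1$ for all $i$; $F_v(x):=\frac1n\sum_iv_iF_i(x)$. Expected Residual with parameter $\delta$: $\mathbb{E}\|(F_v(x)-F_v(x^* ))-(F(x)-F(x^* ))\|^2\le\frac\delta2\|x-x^*\|^2$ for all $x$. SPEG: given $x_0$, $\hat x_{-1}=x_0$, and for $k\ge0$: $\hat x_k=x_k-\gamma_kF_{v_{k-1}}(\hat x_{k-1})$, $x_{k+1}=x_k-\omega_kF_{v_k}(\hat x_k)$, with $v_{-1},v_0,\dots$ i.i.d. from $\mathcal D$. *)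

theory Defs
  imports "HOL-Analysis.Analysis" "HOL-Probability.Probability"
begin

text \<open>Operators F_1..F_n are indexed by a finite type 'i (n = CARD('i)); sample vectors
  v are elements of real^'i; points live in an arbitrary Euclidean space 'a (= R^d).\<close>

definition Fmean :: "('i::finite \<Rightarrow> 'a::euclidean_space \<Rightarrow> 'a) \<Rightarrow> 'a \<Rightarrow> 'a" where
  "Fmean Fs x = (1 / real CARD('i)) *\<^sub>R (\<Sum>i\<in>UNIV. Fs i x)"

definition Fv :: "('i::finite \<Rightarrow> 'a::euclidean_space \<Rightarrow> 'a) \<Rightarrow> real^'i \<Rightarrow> 'a \<Rightarrow> 'a" where
  "Fv Fs v x = (1 / real CARD('i)) *\<^sub>R (\<Sum>i\<in>UNIV. (v $ i) *\<^sub>R Fs i x)"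

definition quasi_strongly_monotone :: "real \<Rightarrow> ('a::real_inner \<Rightarrow> 'a) \<Rightarrow> 'a \<Rightarrow> bool" where
  "quasi_strongly_monotone \<mu> F xs \<longleftrightarrow> (\<forall>x. inner (F x) (x - xs) \<ge> \<mu> * (norm (x - xs))\<^sup>2)"

definition sampling_distribution :: "(real^'i::finite) measure \<Rightarrow> bool" where
  "sampling_distribution D \<longleftrightarrow> prob_space D \<and> sets D = sets borel \<and>
     (AE v in D. \<forall>i. v $ i \<ge> 0) \<and>
     (\<forall>i. integrable D (\<lambda>v. v $ i) \<and> (\<integral>v. v $ i \<partial>D) = 1)"

text \<open>Expected residual with parameter delta (expectation as a nonnegative integral, so
  the condition also asserts finiteness).\<close>
definition expected_residual ::
  "real \<Rightarrow> (real^'i::finite) measure \<Rightarrow> ('i \<Rightarrow> 'a::euclidean_space \<Rightarrow> 'a) \<Rightarrow> 'a \<Rightarrow> bool" where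
  "expected_residual \<delta> D Fs xs \<longleftrightarrow> (\<forall>x.
     (\<integral>\<^sup>+ v. ennreal ((norm ((Fv Fs v x - Fv Fs v xs) - (Fmean Fs x - Fmean Fs xs)))\<^sup>2) \<partial>D)
       \<le> ennreal (\<delta> / 2 * (norm (x - xs))\<^sup>2))"

text \<open>SPEG driven by a sample sequence s, where s 0 = v_{-1} and s (Suc k) = v_k.
  speg_state ... k = (x_k, xhat_{k-1}), with xhat_{-1} = x_0.\<close>
fun speg_state ::
  "('i::finite \<Rightarrow> 'a::euclidean_space \<Rightarrow> 'a) \<Rightarrow> (nat \<Rightarrow> real) \<Rightarrow> (nat \<Rightarrow> real) \<Rightarrow> 'a
    \<Rightarrow> (nat \<Rightarrow> real^'i) \<Rightarrow> nat \<Rightarrow> 'a \<times> 'a" where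
  "speg_state Fs \<gamma> \<omega> x0 s 0 = (x0, x0)"
| "speg_state Fs \<gamma> \<omega> x0 s (Suc k) =
     (let (xk, xh_prev) = speg_state Fs \<gamma> \<omega> x0 s k;
          xh = xk - \<gamma> k *\<^sub>R Fv Fs (s k) xh_prev
      in (xk - \<omega> k *\<^sub>R Fv Fs (s (Suc k)) xh, xh))"

definition speg_R2 ::
  "(real^'i::finite) measure \<Rightarrow> ('i \<Rightarrow> 'a::euclidean_space \<Rightarrow> 'a) \<Rightarrow> (nat \<Rightarrow> real) \<Rightarrow> (nat \<Rightarrow> real)
    \<Rightarrow> 'a \<Rightarrow> 'a \<Rightarrow> nat \<Rightarrow> ennreal" where
  "speg_R2 D Fs \<gamma> \<omega> x0 xs K =
     (\<integral>\<^sup>+ s. ennreal ((norm (fst (speg_state Fs \<gamma> \<omega> x0 s K) - xs))\<^sup>2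
                     + (norm (fst (speg_state Fs \<gamma> \<omega> x0 s K) - snd (speg_state Fs \<gamma> \<omega> x0 s K)))\<^sup>2)
       \<partial>(PiM (UNIV :: nat set) (\<lambda>_. D)))"

end

theory Submission
  imports Defs
begin

lemma indep_split:
  fixes D :: "'b measure" and g :: "(nat \<Rightarrow> 'b) \<Rightarrow> 'b \<Rightarrow> ennreal"
  assumes D: "prob_space D"
  assumes g: "(\<lambda>z. g (fst z) (snd z)) \<in> borel_measurable (PiM (UNIV - {j}) (\<lambda>_. D) \<Otimes>\<^sub>M D)"
  shows "(\<integral>\<^sup>+ s. g (restrict s (UNIV - {j})) (s j) \<partial>PiM UNIV (\<lambda>_. D))
       = (\<integral>\<^sup>+ s. \<integral>\<^sup>+ v. g (restrict s (UNIV - {j})) v \<partial>D \<partial>PiM UNIV (\<lambda>_. D))"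
proof -
  interpret product_prob_space "\<lambda>_. D" "UNIV :: nat set"
    by (simp add: product_prob_space_def product_prob_space_axioms_def product_sigma_finite_def D prob_space_imp_sigma_finite)
  let ?P = "PiM (UNIV :: nat set) (\<lambda>_. D)"
  let ?A = "UNIV - {j}"
  let ?S = "PiM ?A (\<lambda>_. D)"
  let ?X = "\<lambda>s. restrict s ?A"
  have ind: "P.indep_vars (\<lambda>_. D) (\<lambda>i \<omega>. \<omega> i) UNIV"
  proof (subst P.indep_vars_iff_distr_eq_PiM')
    show "distr ?P (\<Pi>\<^sub>M i\<in>UNIV. D) (\<lambda>x. \<lambda>i\<in>UNIV. x i) = (\<Pi>\<^sub>M i\<in>UNIV. distr ?P D (\<lambda>\<omega>. \<omega> i))"
      by (simp add: PiM_component distr_id2 restrict_def cong: PiM_cong)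
  qed auto
  have iv: "P.indep_var ?S (\<lambda>\<omega>. restrict (\<lambda>i. \<omega> i) ?A) (PiM {j} (\<lambda>_. D)) (\<lambda>\<omega>. restrict (\<lambda>i. \<omega> i) {j})"
    by (rule P.indep_var_restrict[OF ind]) auto
  let ?T = "PiM {j} (\<lambda>_. D)"
  let ?Y = "\<lambda>s. restrict s {j}"
  let ?g = "\<lambda>z. g (fst z) (snd z j)"
  from iv have eq: "distr ?P ?S ?X \<Otimes>\<^sub>M distr ?P ?T ?Y = distr ?P (?S \<Otimes>\<^sub>M ?T) (\<lambda>x. (?X x, ?Y x))"
    and rvX: "?X \<in> measurable ?P ?S" and rvY: "?Y \<in> measurable ?P ?T"
    by (auto simp: P.indep_var_distribution_eq)
  have dj: "distr ?P D (\<lambda>\<omega>. \<omega> j) = D" by (rule PiM_component) simp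
  have rvj: "(\<lambda>\<omega>. \<omega> j) \<in> measurable ?P D" by simp
  interpret DS: prob_space "distr ?P ?S ?X" by (rule P.prob_space_distr[OF rvX])
  interpret DT: prob_space "distr ?P ?T ?Y" by (rule P.prob_space_distr[OF rvY])
  interpret Dp: prob_space D by (rule D)
  have gm: "?g \<in> borel_measurable (?S \<Otimes>\<^sub>M ?T)"
  proof -
    have "(\<lambda>z. (fst z, snd z j)) \<in> measurable (?S \<Otimes>\<^sub>M ?T) (?S \<Otimes>\<^sub>M D)"
      by measurable
    from measurable_compose[OF this g] show ?thesis by simp
  qed
  have "(\<integral>\<^sup>+ s. g (?X s) (s j) \<partial>?P) = (\<integral>\<^sup>+ z. ?g z \<partial>distr ?P (?S \<Otimes>\<^sub>M ?T) (\<lambda>x. (?X x, ?Y x)))"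
    by (subst nn_integral_distr) (auto intro: gm measurable_Pair rvX rvY)
  also have "\<dots> = (\<integral>\<^sup>+ z. ?g z \<partial>(distr ?P ?S ?X \<Otimes>\<^sub>M distr ?P ?T ?Y))"
    using eq by simp
  also have "\<dots> = (\<integral>\<^sup>+ x. \<integral>\<^sup>+ y. g x (y j) \<partial>distr ?P ?T ?Y \<partial>distr ?P ?S ?X)"
    by (subst DT.nn_integral_fst[symmetric]) (auto simp: measurable_cong_sets[OF sets_pair_measure_cong[OF sets_distr sets_distr] refl] gm)
  also have "\<dots> = (\<integral>\<^sup>+ x. \<integral>\<^sup>+ v. g x v \<partial>D \<partial>distr ?P ?S ?X)"
  proof (rule nn_integral_cong)
    fix x assume x: "x \<in> space (distr ?P ?S ?X)"
    have m: "(\<lambda>v. g x v) \<in> borel_measurable D"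
      using g x by (auto intro: measurable_compose_Pair1[where g="\<lambda>z. g (fst z) (snd z)", simplified])
    have "(\<integral>\<^sup>+ y. g x (y j) \<partial>distr ?P ?T ?Y) = (\<integral>\<^sup>+ s. g x (s j) \<partial>?P)"
      using m by (subst nn_integral_distr) (auto intro: rvY measurable_compose[OF measurable_component_singleton])
    also have "\<dots> = (\<integral>\<^sup>+ v. g x v \<partial>distr ?P D (\<lambda>\<omega>. \<omega> j))"
      using m by (subst nn_integral_distr) (auto simp: dj)
    finally show "(\<integral>\<^sup>+ y. g x (y j) \<partial>distr ?P ?T ?Y) = (\<integral>\<^sup>+ v. g x v \<partial>D)" by (simp add: dj)
  qed
  also have "\<dots> = (\<integral>\<^sup>+ s. \<integral>\<^sup>+ v. g (?X s) v \<partial>D \<partial>?P)"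
    using sigma_finite_measure.borel_measurable_nn_integral_fst[OF prob_space_imp_sigma_finite[OF D] g]
    by (subst nn_integral_distr) (auto intro: rvX)
  finally show ?thesis .
qed

lemma vec_nth_meas[measurable]: "(\<lambda>x::real^'i. x $ i) \<in> borel_measurable borel"
  by (rule borel_measurable_continuous_onI[OF linear_continuous_on[OF bounded_linear_vec_nth]])

lemma speg_Suc:
  "speg_state Fs \<gamma> \<omega> x0 s (Suc k) =
    (let st = speg_state Fs \<gamma> \<omega> x0 s k; xh = fst st - \<gamma> k *\<^sub>R Fv Fs (s k) (snd st)
     in (fst st - \<omega> k *\<^sub>R Fv Fs (s (Suc k)) xh, xh))"
  by (simp add: Let_def case_prod_unfold)

lemma speg_local:
  "(\<And>i. i \<le> k \<Longrightarrow> s i = s' i) \<Longrightarrow> speg_state Fs \<gamma> \<omega> x0 s k = speg_state Fs \<gamma> \<omega> x0 s' k"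
proof (induction k)
  case 0 then show ?case by simp
next
  case (Suc k)
  then have "speg_state Fs \<gamma> \<omega> x0 s k = speg_state Fs \<gamma> \<omega> x0 s' k" by simp
  moreover have "s k = s' k" "s (Suc k) = s' (Suc k)" using Suc.prems by auto
  ultimately show ?case by (simp only: speg_Suc)
qed

lemma Fv_meas[measurable]:
  assumes meas: "\<And>i. Fs i \<in> borel_measurable borel"
    and f: "f \<in> borel_measurable M" and x: "x \<in> borel_measurable M"
  shows "(\<lambda>\<omega>. Fv Fs (f \<omega>) (x \<omega>)) \<in> borel_measurable M"
proof -
  have "(\<lambda>\<omega>. Fs i (x \<omega>)) \<in> borel_measurable M" for i
    using measurable_compose[OF x meas] by (simp add: comp_def)
  moreover have "(\<lambda>\<omega>. f \<omega> $ i) \<in> borel_measurable M" for i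
    using measurable_compose[OF f vec_nth_meas] by (simp add: comp_def)
  ultimately show ?thesis unfolding Fv_def
    by (intro borel_measurable_scaleR borel_measurable_sum borel_measurable_const) auto
qed

lemma speg_meas:
  assumes meas: "\<And>i. Fs i \<in> borel_measurable borel"
    and S: "\<And>i. i \<le> k \<Longrightarrow> (\<lambda>\<omega>. S \<omega> i) \<in> borel_measurable M"
  shows "(\<lambda>\<omega>. fst (speg_state Fs \<gamma> \<omega>' x0 (S \<omega>) k)) \<in> borel_measurable M
       \<and> (\<lambda>\<omega>. snd (speg_state Fs \<gamma> \<omega>' x0 (S \<omega>) k)) \<in> borel_measurable M"
  using S
proof (induction k)
  case 0 then show ?case by simp
next
  case (Suc k)
  then have IH: "(\<lambda>\<omega>. fst (speg_state Fs \<gamma> \<omega>' x0 (S \<omega>) k)) \<in> borel_measurable M"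
       "(\<lambda>\<omega>. snd (speg_state Fs \<gamma> \<omega>' x0 (S \<omega>) k)) \<in> borel_measurable M" by auto
  have s1: "(\<lambda>\<omega>. S \<omega> k) \<in> borel_measurable M" "(\<lambda>\<omega>. S \<omega> (Suc k)) \<in> borel_measurable M"
    using Suc.prems by auto
  have h: "(\<lambda>\<omega>. fst (speg_state Fs \<gamma> \<omega>' x0 (S \<omega>) k) - \<gamma> k *\<^sub>R Fv Fs (S \<omega> k) (snd (speg_state Fs \<gamma> \<omega>' x0 (S \<omega>) k))) \<in> borel_measurable M"
    by (intro borel_measurable_diff borel_measurable_scaleR borel_measurable_const Fv_meas[OF meas] IH s1)
  show ?case unfolding speg_Suc Let_def fst_conv snd_conv
    by (intro conjI h borel_measurable_diff borel_measurable_scaleR borel_measurable_const Fv_meas[OF meas] IH s1)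
qed

lemma sq_tri: "(norm (a + b))\<^sup>2 \<le> 2 * (norm a)\<^sup>2 + 2 * (norm (b::'a::real_normed_vector))\<^sup>2"
proof -
  have "norm (a + b) \<le> norm a + norm b" by (rule norm_triangle_ineq)
  then have "(norm (a + b))\<^sup>2 \<le> (norm a + norm b)\<^sup>2" by (simp add: power_mono)
  also have "\<dots> \<le> 2 * (norm a)\<^sup>2 + 2 * (norm b)\<^sup>2"
    using sum_squares_ge_zero[of "norm a - norm b" 0] by (simp add: power2_eq_square algebra_simps)
  finally show ?thesis .
qed

lemma Fv_measD:
  assumes meas: "\<And>i. Fs i \<in> borel_measurable borel" and D: "sampling_distribution D"
  shows "(\<lambda>v. Fv Fs v y) \<in> borel_measurable D"
proof -
  have "(\<lambda>v. Fv Fs v y) \<in> borel_measurable borel"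
    by (rule Fv_meas[OF meas]) auto
  then show ?thesis using D unfolding sampling_distribution_def
    by (subst measurable_cong_sets[of D borel]) auto
qed

lemma Fv_lin:
  assumes D: "sampling_distribution D"
  shows "integrable D (\<lambda>v. inner (Fv Fs v y) w)"
    and "(\<integral>v. inner (Fv Fs v y) w \<partial>D) = inner (Fmean Fs y) w"
proof -
  have e: "\<And>v. inner (Fv Fs v y) w = (\<Sum>i\<in>UNIV. (v $ i) * (inner (Fs i y) w / real CARD('a)))"
    by (simp add: Fv_def inner_sum_left sum_divide_distrib)
  have int: "\<And>i. integrable D (\<lambda>v. v $ i)" and one: "\<And>i. (\<integral>v. v $ i \<partial>D) = 1"
    using D unfolding sampling_distribution_def by auto
  show "integrable D (\<lambda>v. inner (Fv Fs v y) w)"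
    unfolding e by (auto intro!: Bochner_Integration.integrable_sum integrable_mult_left integrable_mult_right int)
  show "(\<integral>v. inner (Fv Fs v y) w \<partial>D) = inner (Fmean Fs y) w"
    unfolding e using int one
    by (simp add: Bochner_Integration.integral_sum integrable_mult_left Fmean_def inner_sum_left sum_divide_distrib)
qed

lemma two_enn: "0 \<le> t \<Longrightarrow> ennreal (2 * t) = 2 * ennreal t"
  using ennreal_mult[of 2 t] by simp

lemma noise_bound:
  assumes meas: "\<And>i. Fs i \<in> borel_measurable borel" and D: "sampling_distribution D"
    and root: "Fmean Fs xs = 0" and delta: "\<delta> \<ge> 0" and ER: "expected_residual \<delta> D Fs xs"
    and sig_int: "integrable D (\<lambda>v. (norm (Fv Fs v xs))\<^sup>2)"
    and sig: "\<sigma>2 = (\<integral>v. (norm (Fv Fs v xs))\<^sup>2 \<partial>D)"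
  shows "(\<integral>\<^sup>+ v. ennreal ((norm (Fv Fs v y - Fmean Fs y))\<^sup>2) \<partial>D) \<le> ennreal (\<delta> * (norm (y - xs))\<^sup>2 + 2 * \<sigma>2)"
    and "integrable D (\<lambda>v. (norm (Fv Fs v y - Fmean Fs y))\<^sup>2)"
proof -
  have my: "(\<lambda>v. Fv Fs v y) \<in> borel_measurable D" and mx: "(\<lambda>v. Fv Fs v xs) \<in> borel_measurable D"
    by (rule Fv_measD[OF meas D])+
  let ?r = "\<lambda>v. (norm ((Fv Fs v y - Fv Fs v xs) - (Fmean Fs y - Fmean Fs xs)))\<^sup>2"
  let ?q = "\<lambda>v. (norm (Fv Fs v xs))\<^sup>2"
  have pt: "(norm (Fv Fs v y - Fmean Fs y))\<^sup>2 \<le> 2 * ?r v + 2 * ?q v" for v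
  proof -
    have "Fv Fs v y - Fmean Fs y = ((Fv Fs v y - Fv Fs v xs) - (Fmean Fs y - Fmean Fs xs)) + Fv Fs v xs"
      using root by (simp add: algebra_simps)
    then show ?thesis using sq_tri by metis
  qed
  have ERy: "(\<integral>\<^sup>+ v. ennreal (?r v) \<partial>D) \<le> ennreal (\<delta> / 2 * (norm (y - xs))\<^sup>2)"
    using ER unfolding expected_residual_def by blast
  have sq: "(\<integral>\<^sup>+ v. ennreal (?q v) \<partial>D) = ennreal \<sigma>2"
    using sig sig_int by (simp add: nn_integral_eq_integral)
  have "(\<integral>\<^sup>+ v. ennreal ((norm (Fv Fs v y - Fmean Fs y))\<^sup>2) \<partial>D) \<le> (\<integral>\<^sup>+ v. (2 * ennreal (?r v) + 2 * ennreal (?q v)) \<partial>D)"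
  proof (rule nn_integral_mono)
    fix v
    have "ennreal ((norm (Fv Fs v y - Fmean Fs y))\<^sup>2) \<le> ennreal (2 * ?r v + 2 * ?q v)"
      using pt by (rule ennreal_leI)
    also have "\<dots> = 2 * ennreal (?r v) + 2 * ennreal (?q v)"
      by (simp add: ennreal_plus ennreal_mult)
    finally show "ennreal ((norm (Fv Fs v y - Fmean Fs y))\<^sup>2) \<le> 2 * ennreal (?r v) + 2 * ennreal (?q v)" .
  qed
  also have "\<dots> = 2 * (\<integral>\<^sup>+ v. ennreal (?r v) \<partial>D) + 2 * (\<integral>\<^sup>+ v. ennreal (?q v) \<partial>D)"
    using my mx by (simp add: nn_integral_add nn_integral_cmult)
  also have "\<dots> \<le> 2 * ennreal (\<delta> / 2 * (norm (y - xs))\<^sup>2) + 2 * ennreal \<sigma>2"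
    using ERy sq by (intro add_mono mult_left_mono) auto
  also have "\<dots> = ennreal (\<delta> * (norm (y - xs))\<^sup>2 + 2 * \<sigma>2)"
  proof -
    have a0: "\<delta> / 2 * (norm (y - xs))\<^sup>2 \<ge> 0" using delta by simp
    have s0: "\<sigma>2 \<ge> 0" using sig by simp
    have "ennreal (\<delta> * (norm (y - xs))\<^sup>2 + 2 * \<sigma>2) = ennreal (2 * (\<delta> / 2 * (norm (y - xs))\<^sup>2)) + ennreal (2 * \<sigma>2)"
      using a0 s0 by (subst ennreal_plus[symmetric]) auto
    also have "\<dots> = 2 * ennreal (\<delta> / 2 * (norm (y - xs))\<^sup>2) + 2 * ennreal \<sigma>2"
      using a0 s0 by (simp only: two_enn)
    finally show ?thesis by simp
  qed
  finally show *: "(\<integral>\<^sup>+ v. ennreal ((norm (Fv Fs v y - Fmean Fs y))\<^sup>2) \<partial>D) \<le> ennreal (\<delta> * (norm (y - xs))\<^sup>2 + 2 * \<sigma>2)" .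
  show "integrable D (\<lambda>v. (norm (Fv Fs v y - Fmean Fs y))\<^sup>2)"
    using * my by (intro integrableI_bounded) (auto simp: top_unique ennreal_less_top intro: le_less_trans)
qed

lemma real_ineq:
  fixes A Bb P Cc M Fp N Y w \<mu> L \<delta> \<sigma> :: real
  assumes nn: "0 \<le> A" "0 \<le> Bb" "0 \<le> P" "0 \<le> Cc" "0 \<le> N" "0 \<le> Y" "0 \<le> \<delta>" "0 \<le> \<mu>" "0 \<le> L"
    and hM: "M \<ge> \<mu> * Cc" and hF: "Fp \<le> 2 * L\<^sup>2 * Y + 2 * N" and hY: "Y \<le> 2 * Bb + 2 * w\<^sup>2 * P"
    and hA: "A \<le> 2 * Cc + 2 * w\<^sup>2 * P" and w0: "0 \<le> w" and wL: "w * L \<le> 1/4"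
    and wd: "18 * \<delta> * w \<le> \<mu>" and wm: "w * \<mu> \<le> 1/4"
  shows "A - 2 * w * M + 2 * w\<^sup>2 * Fp - w\<^sup>2 * P + 2 * w\<^sup>2 * (\<delta> * Cc + 2 * \<sigma>)
         \<le> (1 - 17/18 * w * \<mu>) * A + 1/2 * Bb + 4 * w\<^sup>2 * N + 4 * w\<^sup>2 * \<sigma>"
proof -
  have wL2: "(w * L)\<^sup>2 \<le> 1/16"
  proof -
    have "(w * L)\<^sup>2 \<le> (1/4)\<^sup>2" using wL w0 nn by (intro power_mono) auto
    then show ?thesis by (simp add: power2_eq_square)
  qed
  define wm' where "wm' = w * \<mu>"
  define W where "W = w\<^sup>2"
  define wl where "wl = (w * L)\<^sup>2"
  have W0: "W \<ge> 0" "wm' \<ge> 0" "wl \<ge> 0" using w0 nn by (auto simp: W_def wm'_def wl_def)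
  have s1: "2 * w * M \<ge> 2 * (wm' * Cc)" using hM w0 unfolding wm'_def
    by (metis mult_left_mono mult.assoc zero_le_numeral mult_nonneg_nonneg)
  have s2: "2 * w\<^sup>2 * Fp \<le> 4 * (wl * Y) + 4 * (W * N)"
  proof -
    have "2 * w\<^sup>2 * Fp \<le> 2 * w\<^sup>2 * (2 * L\<^sup>2 * Y + 2 * N)" using hF by (simp add: mult_left_mono)
    also have "\<dots> = 4 * (wl * Y) + 4 * (W * N)" by (simp add: wl_def W_def power_mult_distrib algebra_simps)
    finally show ?thesis .
  qed
  have s3: "wl * Y \<le> wl * (2 * Bb + 2 * (W * P))" using hY W0 by (simp add: mult_left_mono W_def)
  have s4': "wl * (2 * Bb + 2 * (W * P)) \<le> 1/16 * (2 * Bb + 2 * (W * P))"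
    using wL2 nn W0 unfolding wl_def by (intro mult_right_mono) auto
  have s4: "wl * Y \<le> Bb / 8 + (W * P) / 8" using s3 s4' by simp
  have s5': "W * \<delta> * Cc \<le> (wm' / 18) * Cc"
  proof -
    have "w * (18 * \<delta> * w) \<le> w * \<mu>" using wd w0 by (rule mult_left_mono)
    then have "W * \<delta> \<le> wm' / 18" by (simp add: W_def wm'_def power2_eq_square algebra_simps)
    then show ?thesis using nn by (intro mult_right_mono) auto
  qed
  have s5: "W * \<delta> * Cc \<le> (wm' * Cc) / 18" using s5' by simp
  have s6': "wm' * A \<le> wm' * (2 * Cc + 2 * (W * P))"
    using hA W0 by (simp add: mult_left_mono W_def)
  have s6: "wm' * A \<le> 2 * (wm' * Cc) + 2 * (wm' * (W * P))" using s6' by (simp add: algebra_simps)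
  have s7': "wm' * (W * P) \<le> 1/4 * (W * P)"
    using wm nn W0 unfolding wm'_def by (intro mult_right_mono) auto
  have s7: "wm' * (W * P) \<le> (W * P) / 4" using s7' by simp
  have WP0: "W * P \<ge> 0" using W0 nn by simp
  have lhs: "A - 2 * w * M + 2 * w\<^sup>2 * Fp - w\<^sup>2 * P + 2 * w\<^sup>2 * (\<delta> * Cc + 2 * \<sigma>)
     = A - 2 * w * M + 2 * w\<^sup>2 * Fp - W * P + 2 * (W * \<delta> * Cc) + 4 * (W * \<sigma>)"
    by (simp add: W_def algebra_simps)
  have rhs: "(1 - 17/18 * w * \<mu>) * A + 1/2 * Bb + 4 * w\<^sup>2 * N + 4 * w\<^sup>2 * \<sigma>
     = A - 17/18 * (wm' * A) + 1/2 * Bb + 4 * (W * N) + 4 * (W * \<sigma>)"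
    by (simp add: W_def wm'_def algebra_simps)
  show ?thesis unfolding lhs rhs using s1 s2 s4 s5 s6 s7 WP0 by linarith
qed

lemma step_ident:
  fixes x xs p f e :: "'a::real_inner" and w :: real
  shows "(norm (x - w *\<^sub>R (f + e) - xs))\<^sup>2 + (norm (x - w *\<^sub>R (f + e) - (x - w *\<^sub>R p)))\<^sup>2
     = ((norm (x - xs))\<^sup>2 - 2 * w * inner f (x - w *\<^sub>R p - xs) + 2 * w\<^sup>2 * (norm (f - p))\<^sup>2 - w\<^sup>2 * (norm p)\<^sup>2)
       - 2 * w * inner e (x - w *\<^sub>R p - xs) + 4 * w\<^sup>2 * inner e (f - p) + 2 * w\<^sup>2 * (norm e)\<^sup>2"
  unfolding power2_norm_eq_inner
  by (simp add: inner_diff_left inner_diff_right inner_add_left inner_add_right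
      inner_commute power2_eq_square algebra_simps)

lemma inner_step:
  fixes Fs :: "'i::finite \<Rightarrow> 'a::euclidean_space \<Rightarrow> 'a"
  assumes meas: "\<And>i. Fs i \<in> borel_measurable borel" and D: "sampling_distribution D"
    and root: "Fmean Fs xs = 0" and delta: "\<delta> \<ge> 0" and ER: "expected_residual \<delta> D Fs xs"
    and sig_int: "integrable D (\<lambda>v. (norm (Fv Fs v xs))\<^sup>2)"
    and sig: "\<sigma>2 = (\<integral>v. (norm (Fv Fs v xs))\<^sup>2 \<partial>D)"
    and lip: "L-lipschitz_on UNIV (Fmean Fs)" and qsm: "quasi_strongly_monotone \<mu> (Fmean Fs) xs"
    and mu0: "0 \<le> \<mu>"
    and w0: "0 \<le> w" and wL: "w * L \<le> 1/4" and wd: "18 * \<delta> * w \<le> \<mu>" and wm: "w * \<mu> \<le> 1/4"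
  shows "(\<integral>\<^sup>+ v. ennreal ((norm (x - w *\<^sub>R Fv Fs v (x - w *\<^sub>R Fv Fs v0 xh) - xs))\<^sup>2
            + (norm (x - w *\<^sub>R Fv Fs v (x - w *\<^sub>R Fv Fs v0 xh) - (x - w *\<^sub>R Fv Fs v0 xh)))\<^sup>2) \<partial>D)
     \<le> ennreal ((1 - 17/18 * w * \<mu>) * (norm (x - xs))\<^sup>2 + 1/2 * (norm (x - xh))\<^sup>2
            + 4 * w\<^sup>2 * (norm (Fv Fs v0 xh - Fmean Fs xh))\<^sup>2 + 4 * w\<^sup>2 * \<sigma>2)"
proof -
  interpret D: prob_space D using D unfolding sampling_distribution_def by simp
  define p where "p = Fv Fs v0 xh"
  define y where "y = x - w *\<^sub>R p"
  define f where "f = Fmean Fs y"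
  define e where "e = (\<lambda>v. Fv Fs v y - f)"
  define C0 where "C0 = (norm (x - xs))\<^sup>2 - 2 * w * inner f (x - w *\<^sub>R p - xs) + 2 * w\<^sup>2 * (norm (f - p))\<^sup>2 - w\<^sup>2 * (norm p)\<^sup>2"
  let ?R = "\<lambda>v. (norm (x - w *\<^sub>R Fv Fs v y - xs))\<^sup>2 + (norm (x - w *\<^sub>R Fv Fs v y - y))\<^sup>2"
  have Req: "?R v = C0 - 2 * w * inner (e v) (x - w *\<^sub>R p - xs) + 4 * w\<^sup>2 * inner (e v) (f - p) + 2 * w\<^sup>2 * (norm (e v))\<^sup>2" for v
  proof -
    have "Fv Fs v y = f + e v" unfolding e_def by simp
    then show ?thesis using step_ident[of x w f "e v" xs p] unfolding C0_def y_def by simp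
  qed
  have lin: "integrable D (\<lambda>v. inner (e v) u) \<and> (\<integral>v. inner (e v) u \<partial>D) = 0" for u
  proof -
    have eq: "(\<lambda>v. inner (e v) u) = (\<lambda>v. inner (Fv Fs v y) u - inner f u)"
      unfolding e_def by (simp add: inner_diff_left)
    show ?thesis unfolding eq using Fv_lin[OF D, of Fs y u]
      by (simp add: f_def D.prob_space)
  qed
  have nb: "(\<integral>\<^sup>+ v. ennreal ((norm (e v))\<^sup>2) \<partial>D) \<le> ennreal (\<delta> * (norm (y - xs))\<^sup>2 + 2 * \<sigma>2)"
    and ie: "integrable D (\<lambda>v. (norm (e v))\<^sup>2)"
    using noise_bound[OF meas D root delta ER sig_int sig, of y] unfolding e_def f_def by auto
  have s0: "\<sigma>2 \<ge> 0" using sig by simp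
  have eI: "(\<integral>v. (norm (e v))\<^sup>2 \<partial>D) \<le> \<delta> * (norm (y - xs))\<^sup>2 + 2 * \<sigma>2"
  proof -
    have "ennreal (\<integral>v. (norm (e v))\<^sup>2 \<partial>D) \<le> ennreal (\<delta> * (norm (y - xs))\<^sup>2 + 2 * \<sigma>2)"
      using nb ie by (simp add: nn_integral_eq_integral)
    then show ?thesis using delta s0 by (subst (asm) ennreal_le_iff) auto
  qed
  have intR: "integrable D ?R"
    unfolding Req using lin ie by auto
  have intEq: "(\<integral>v. ?R v \<partial>D) = C0 + 2 * w\<^sup>2 * (\<integral>v. (norm (e v))\<^sup>2 \<partial>D)"
    unfolding Req using lin ie by (simp add: D.prob_space)
  have "(\<integral>\<^sup>+ v. ennreal (?R v) \<partial>D) = ennreal (\<integral>v. ?R v \<partial>D)"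
    by (rule nn_integral_eq_integral[OF intR]) auto
  also have "\<dots> \<le> ennreal ((1 - 17/18 * w * \<mu>) * (norm (x - xs))\<^sup>2 + 1/2 * (norm (x - xh))\<^sup>2
            + 4 * w\<^sup>2 * (norm (p - Fmean Fs xh))\<^sup>2 + 4 * w\<^sup>2 * \<sigma>2)"
  proof (rule ennreal_leI)
    have L0: "0 \<le> L" using lip by (rule lipschitz_on_nonneg)
    have hM: "inner f (y - xs) \<ge> \<mu> * (norm (y - xs))\<^sup>2"
      using qsm unfolding quasi_strongly_monotone_def f_def by blast
    have hF: "(norm (f - p))\<^sup>2 \<le> 2 * L\<^sup>2 * (norm (y - xh))\<^sup>2 + 2 * (norm (p - Fmean Fs xh))\<^sup>2"
    proof -
      have "f - p = (Fmean Fs y - Fmean Fs xh) + (Fmean Fs xh - p)" unfolding f_def by simp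
      then have "(norm (f - p))\<^sup>2 \<le> 2 * (norm (Fmean Fs y - Fmean Fs xh))\<^sup>2 + 2 * (norm (Fmean Fs xh - p))\<^sup>2"
        using sq_tri by metis
      moreover have "norm (Fmean Fs y - Fmean Fs xh) \<le> L * norm (y - xh)"
        using lipschitz_onD[OF lip, of y xh] by (simp add: dist_norm)
      then have "(norm (Fmean Fs y - Fmean Fs xh))\<^sup>2 \<le> (L * norm (y - xh))\<^sup>2"
        by (intro power_mono) auto
      ultimately show ?thesis by (simp add: norm_minus_commute power_mult_distrib)
    qed
    have hY: "(norm (y - xh))\<^sup>2 \<le> 2 * (norm (x - xh))\<^sup>2 + 2 * w\<^sup>2 * (norm p)\<^sup>2"
    proof -
      have "y - xh = (x - xh) + (- (w *\<^sub>R p))" unfolding y_def by simp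
      then have "(norm (y - xh))\<^sup>2 \<le> 2 * (norm (x - xh))\<^sup>2 + 2 * (norm (- (w *\<^sub>R p)))\<^sup>2"
        using sq_tri by metis
      then show ?thesis using w0 by (simp add: power_mult_distrib)
    qed
    have hA: "(norm (x - xs))\<^sup>2 \<le> 2 * (norm (y - xs))\<^sup>2 + 2 * w\<^sup>2 * (norm p)\<^sup>2"
    proof -
      have "x - xs = (y - xs) + w *\<^sub>R p" unfolding y_def by simp
      then have "(norm (x - xs))\<^sup>2 \<le> 2 * (norm (y - xs))\<^sup>2 + 2 * (norm (w *\<^sub>R p))\<^sup>2"
        using sq_tri by metis
      then show ?thesis using w0 by (simp add: power_mult_distrib)
    qed
    have "C0 + 2 * w\<^sup>2 * (\<integral>v. (norm (e v))\<^sup>2 \<partial>D) \<le> C0 + 2 * w\<^sup>2 * (\<delta> * (norm (y - xs))\<^sup>2 + 2 * \<sigma>2)"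
      using eI by (simp add: mult_left_mono)
    also have "\<dots> \<le> (1 - 17/18 * w * \<mu>) * (norm (x - xs))\<^sup>2 + 1/2 * (norm (x - xh))\<^sup>2
            + 4 * w\<^sup>2 * (norm (p - Fmean Fs xh))\<^sup>2 + 4 * w\<^sup>2 * \<sigma>2"
      unfolding C0_def y_def[symmetric]
      by (rule real_ineq[OF _ _ _ _ _ _ delta mu0 L0 hM hF hY hA w0 wL wd wm]) auto
    finally show "(\<integral>v. ?R v \<partial>D) \<le> (1 - 17/18 * w * \<mu>) * (norm (x - xs))\<^sup>2 + 1/2 * (norm (x - xh))\<^sup>2
            + 4 * w\<^sup>2 * (norm (p - Fmean Fs xh))\<^sup>2 + 4 * w\<^sup>2 * \<sigma>2"
      using intEq by simp
  qed
  finally show ?thesis unfolding y_def p_def .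
qed

lemma speg_local_snd:
  "(\<And>i. i < k \<Longrightarrow> s i = s' i) \<Longrightarrow> snd (speg_state Fs \<gamma> \<omega> x0 s k) = snd (speg_state Fs \<gamma> \<omega> x0 s' k)"
proof (cases k)
  case 0 then show ?thesis by simp
next
  case (Suc m)
  assume h: "\<And>i. i < k \<Longrightarrow> s i = s' i"
  then have "speg_state Fs \<gamma> \<omega> x0 s m = speg_state Fs \<gamma> \<omega> x0 s' m"
    using Suc by (intro speg_local) auto
  moreover have "s m = s' m" using h Suc by auto
  ultimately show ?thesis unfolding Suc speg_Suc Let_def snd_conv by simp
qed

lemma coord_meas_D:
  assumes "sets D = sets (borel :: (real^'i::finite) measure)" "i \<in> I"
  shows "(\<lambda>\<omega>. \<omega> i) \<in> borel_measurable (PiM I (\<lambda>_. D))"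
proof -
  have "(\<lambda>\<omega>. \<omega> i) \<in> measurable (PiM I (\<lambda>_. D)) D"
    using assms(2) by (rule measurable_component_singleton)
  then show ?thesis using assms(1) by (simp add: measurable_cong_sets[OF refl assms(1)])
qed

lemma coord_meas_out:
  assumes "k \<notin> I"
  shows "(\<lambda>\<omega>. \<omega> k) \<in> borel_measurable (PiM I M)"
proof -
  have eq: "\<And>\<omega>. \<omega> \<in> space (PiM I M) \<Longrightarrow> \<omega> k = undefined"
    by (metis PiE_arb space_PiM assms)
  show ?thesis
    using measurable_cong[of "PiM I M" "\<lambda>\<omega>. \<omega> k" "\<lambda>_. undefined" borel] eq by simp
qed

fun bseq :: "(nat \<Rightarrow> real) \<Rightarrow> real \<Rightarrow> real \<Rightarrow> real \<Rightarrow> nat \<Rightarrow> real" where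
  "bseq stp \<mu> \<sigma> b0 0 = b0"
| "bseq stp \<mu> \<sigma> b0 (Suc k) = (1 - stp k * \<mu> / 2) * bseq stp \<mu> \<sigma> b0 k + 12 * (stp k)\<^sup>2 * \<sigma>"

lemma pow_exp_bound:
  fixes t :: real assumes "0 \<le> t" "t \<le> 1"
  shows "(1 - t) ^ n \<le> exp (- (t * real n))"
proof -
  have "1 - t \<le> exp (- t)" using exp_ge_add_one_self[of "-t"] by simp
  then have "(1 - t) ^ n \<le> exp (- t) ^ n" using assms by (intro power_mono) auto
  also have "\<dots> = exp (- (t * real n))" by (simp add: exp_of_nat_mult[symmetric] mult.commute)
  finally show ?thesis .
qed

lemma bseq_phase1:
  fixes w \<mu> \<sigma> b0 :: real
  assumes st: "\<And>j. j < k \<Longrightarrow> stp j = w" and mu: "\<mu> > 0" and w0: "0 < w" and wm: "w * \<mu> \<le> 1/4"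
    and s0: "0 \<le> \<sigma>" and b0: "0 \<le> b0"
  shows "bseq stp \<mu> \<sigma> b0 k \<le> (1 - w * \<mu> / 2) ^ k * b0 + 24 * w * \<sigma> / \<mu>"
  using st
proof (induction k)
  case 0 then show ?case using w0 mu s0 by simp
next
  case (Suc k)
  then have IH: "bseq stp \<mu> \<sigma> b0 k \<le> (1 - w * \<mu> / 2) ^ k * b0 + 24 * w * \<sigma> / \<mu>" by auto
  have sk: "stp k = w" using Suc.prems by auto
  have q0: "0 \<le> 1 - w * \<mu> / 2" using wm by simp
  have "bseq stp \<mu> \<sigma> b0 (Suc k) = (1 - w * \<mu> / 2) * bseq stp \<mu> \<sigma> b0 k + 12 * w\<^sup>2 * \<sigma>"
    by (simp add: sk)
  also have "\<dots> \<le> (1 - w * \<mu> / 2) * ((1 - w * \<mu> / 2) ^ k * b0 + 24 * w * \<sigma> / \<mu>) + 12 * w\<^sup>2 * \<sigma>"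
    using IH q0 by (simp add: mult_left_mono)
  also have "\<dots> = (1 - w * \<mu> / 2) ^ Suc k * b0 + 24 * w * \<sigma> / \<mu>"
    using mu by (simp add: field_simps power2_eq_square)
  finally show ?case .
qed

lemma bseq_phase2:
  fixes \<mu> \<sigma> b0 :: real
  assumes st: "\<And>j. j \<ge> k0 \<Longrightarrow> stp j = (2 * real j + 1) / (real j + 1)\<^sup>2 * (2 / \<mu>)" and mu: "\<mu> > 0"
    and s0: "0 \<le> \<sigma>"
  shows "(real (k0 + m))\<^sup>2 * bseq stp \<mu> \<sigma> b0 (k0 + m) \<le> (real k0)\<^sup>2 * bseq stp \<mu> \<sigma> b0 k0 + 192 * real m * \<sigma> / \<mu>\<^sup>2"
proof (induction m)
  case 0 then show ?case by simp
next
  case (Suc m)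
  let ?k = "k0 + m"
  define x where "x = real ?k"
  let ?x = x
  have x0: "x \<ge> 0" unfolding x_def by simp
  have sk: "stp ?k = (2 * ?x + 1) / (?x + 1)\<^sup>2 * (2 / \<mu>)" using st unfolding x_def by simp
  have pos: "(?x + 1)\<^sup>2 > 0" using x0 by simp
  have pos': "?x + 1 \<noteq> 0" using x0 by simp
  have e1: "(?x + 1)\<^sup>2 * (1 - stp ?k * \<mu> / 2) = ?x\<^sup>2"
  proof -
    have h1: "stp ?k * \<mu> / 2 = (2 * ?x + 1) / (?x + 1)\<^sup>2" unfolding sk using mu pos by (simp add: field_simps)
    have h2: "(?x + 1)\<^sup>2 * (1 - (2 * ?x + 1) / (?x + 1)\<^sup>2) = (?x + 1)\<^sup>2 - (2 * ?x + 1)"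
      using pos by (simp add: right_diff_distrib)
    have h3: "(?x + 1)\<^sup>2 - (2 * ?x + 1) = ?x\<^sup>2" by (simp add: power2_eq_square algebra_simps)
    show ?thesis unfolding h1 h2 by (rule h3)
  qed
  have e2: "(?x + 1)\<^sup>2 * (12 * (stp ?k)\<^sup>2 * \<sigma>) = 48 * (2 * ?x + 1)\<^sup>2 / (?x + 1)\<^sup>2 * \<sigma> / \<mu>\<^sup>2"
  proof -
    define Y where "Y = (?x + 1)\<^sup>2"
    define c where "c = 2 * ?x + 1"
    have Y0: "Y \<noteq> 0" using pos unfolding Y_def by simp
    have "Y * (12 * (c / Y * (2 / \<mu>))\<^sup>2 * \<sigma>) = 48 * c\<^sup>2 / Y * \<sigma> / \<mu>\<^sup>2"
      using Y0 mu by (simp add: field_simps power2_eq_square)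
    then show ?thesis unfolding sk Y_def c_def .
  qed
  have e3: "(2 * ?x + 1)\<^sup>2 / (?x + 1)\<^sup>2 \<le> 4"
    using pos x0 by (simp add: field_simps power2_eq_square)
  have e4: "48 * (2 * ?x + 1)\<^sup>2 / (?x + 1)\<^sup>2 * \<sigma> / \<mu>\<^sup>2 \<le> 192 * \<sigma> / \<mu>\<^sup>2"
  proof -
    have "48 * ((2 * ?x + 1)\<^sup>2 / (?x + 1)\<^sup>2) * \<sigma> \<le> 48 * 4 * \<sigma>"
      using e3 s0 by (intro mult_right_mono) auto
    then have "48 * (2 * ?x + 1)\<^sup>2 / (?x + 1)\<^sup>2 * \<sigma> \<le> 192 * \<sigma>" by simp
    then show ?thesis by (rule divide_right_mono) simp
  qed
  have "(real (k0 + Suc m))\<^sup>2 * bseq stp \<mu> \<sigma> b0 (k0 + Suc m)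
      = (?x + 1)\<^sup>2 * (1 - stp ?k * \<mu> / 2) * bseq stp \<mu> \<sigma> b0 ?k + (?x + 1)\<^sup>2 * (12 * (stp ?k)\<^sup>2 * \<sigma>)"
    unfolding x_def by (simp add: algebra_simps)
  also have "\<dots> = ?x\<^sup>2 * bseq stp \<mu> \<sigma> b0 ?k + 48 * (2 * ?x + 1)\<^sup>2 / (?x + 1)\<^sup>2 * \<sigma> / \<mu>\<^sup>2"
    using e1 e2 by simp
  also have "\<dots> \<le> (real k0)\<^sup>2 * bseq stp \<mu> \<sigma> b0 k0 + 192 * real m * \<sigma> / \<mu>\<^sup>2 + 192 * \<sigma> / \<mu>\<^sup>2"
    using Suc.IH e4 unfolding x_def by simp
  also have "\<dots> = (real k0)\<^sup>2 * bseq stp \<mu> \<sigma> b0 k0 + 192 * real (Suc m) * \<sigma> / \<mu>\<^sup>2"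
    by (simp add: add_divide_distrib algebra_simps)
  finally show ?case .
qed

lemma bseq_final:
  fixes \<mu> \<delta> L \<sigma> b0 :: real
  assumes mu: "\<mu> > 0" and delta: "\<delta> > 0" and Lmu: "\<mu> \<le> L" and s0: "0 \<le> \<sigma>" and b0: "0 \<le> b0"
  defines "wbar \<equiv> min (1 / (4 * L)) (\<mu> / (18 * \<delta>))"
  defines "kstar \<equiv> nat \<lceil>4 / (\<mu> * wbar)\<rceil>"
  defines "step \<equiv> (\<lambda>k::nat. if k \<le> kstar then wbar
                    else (2 * real k + 1) / (real k + 1)\<^sup>2 * (2 / \<mu>))"
  assumes K: "K \<ge> kstar"
  shows "bseq step \<mu> \<sigma> b0 K \<le> (real kstar / real K)\<^sup>2 / exp 2 * b0 + 192 * \<sigma> / (\<mu>\<^sup>2 * real K)"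
proof -
  have L0: "L > 0" using mu Lmu by simp
  have w0: "wbar > 0" unfolding wbar_def using L0 mu delta by simp
  have wL: "wbar \<le> 1 / (4 * L)" unfolding wbar_def by simp
  have wmu: "wbar * \<mu> \<le> 1/4"
  proof -
    have "wbar * \<mu> \<le> 1 / (4 * L) * \<mu>" using wL mu by (intro mult_right_mono) auto
    also have "\<dots> \<le> 1/4" using Lmu L0 by (simp add: field_simps)
    finally show ?thesis .
  qed
  have wmu': "wbar \<le> 1 / (4 * \<mu>)" using wmu mu by (simp add: field_simps)
  define t where "t = wbar * \<mu> / 2"
  have t0: "0 < t" "t \<le> 1" unfolding t_def using w0 mu wmu by auto
  define r where "r = 4 / (\<mu> * wbar)"
  have r0: "r > 0" unfolding r_def using mu w0 by simp
  have kr: "real kstar \<ge> r" unfolding kstar_def r_def[symmetric] by linarith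
  have kr2: "real kstar < r + 1" unfolding kstar_def r_def[symmetric] using r0 by linarith
  have tk: "t * real kstar \<ge> 2"
  proof -
    have "t * r = 2" unfolding t_def r_def using mu w0 by (simp add: field_simps)
    then show ?thesis using kr t0 by (metis mult_left_mono less_imp_le)
  qed
  have kpos: "real kstar > 0" using kr r0 by simp
  have wr: "wbar * r = 4 / \<mu>" unfolding r_def using mu w0 by (simp add: field_simps)
  have st1: "\<And>j. j < Suc kstar \<Longrightarrow> step j = wbar" unfolding step_def by simp
  have P1: "bseq step \<mu> \<sigma> b0 k \<le> (1 - t) ^ k * b0 + 24 * wbar * \<sigma> / \<mu>" if "k \<le> Suc kstar" for k
    using bseq_phase1[of k step wbar \<mu> \<sigma> b0] that st1 mu w0 wmu s0 b0 unfolding t_def by fastforce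
  have ex: "(1 - t) ^ kstar \<le> exp (- 2)"
  proof -
    have "(1 - t) ^ kstar \<le> exp (- (t * real kstar))" using pow_exp_bound t0 by simp
    also have "\<dots> \<le> exp (- 2)" using tk by simp
    finally show ?thesis .
  qed
  have noise1: "24 * wbar * \<sigma> / \<mu> \<le> 192 * \<sigma> / (\<mu>\<^sup>2 * real kstar)"
  proof -
    have "wbar * real kstar \<le> wbar * (r + 1)" using kr2 w0 by simp
    also have "\<dots> \<le> 8 / \<mu>" using wr wmu' mu by (simp add: algebra_simps field_simps)
    finally have "wbar * real kstar \<le> 8 / \<mu>" .
    then have "24 * \<sigma> * \<mu> * (wbar * real kstar) \<le> 24 * \<sigma> * \<mu> * (8 / \<mu>)"
      using mu s0 by (intro mult_left_mono) auto
    also have "\<dots> = 192 * \<sigma>" using mu by simp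
    finally have h: "24 * \<sigma> * \<mu> * (wbar * real kstar) \<le> 192 * \<sigma>" .
    have eq: "24 * wbar * \<sigma> / \<mu> = (24 * \<sigma> * \<mu> * (wbar * real kstar)) / (\<mu>\<^sup>2 * real kstar)"
      using mu kpos by (simp add: field_simps power2_eq_square)
    show ?thesis unfolding eq by (rule divide_right_mono[OF h]) (use mu kpos in simp)
  qed
  show ?thesis
  proof (cases "K = kstar")
    case True
    have "bseq step \<mu> \<sigma> b0 K \<le> (1 - t) ^ kstar * b0 + 24 * wbar * \<sigma> / \<mu>" using P1[of K] True by simp
    also have "\<dots> \<le> exp (- 2) * b0 + 192 * \<sigma> / (\<mu>\<^sup>2 * real kstar)"
      using ex noise1 b0 by (intro add_mono mult_right_mono) auto
    also have "\<dots> = (real kstar / real K)\<^sup>2 / exp 2 * b0 + 192 * \<sigma> / (\<mu>\<^sup>2 * real K)"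
      using True kpos by (simp add: exp_minus field_simps)
    finally show ?thesis .
  next
    case False
    then obtain m where Km: "K = Suc kstar + m" using K by (metis le_Suc_ex le_neq_implies_less Suc_le_eq)
    have st2: "\<And>j. j \<ge> Suc kstar \<Longrightarrow> step j = (2 * real j + 1) / (real j + 1)\<^sup>2 * (2 / \<mu>)"
      unfolding step_def by simp
    have P2: "(real K)\<^sup>2 * bseq step \<mu> \<sigma> b0 K \<le> (real (Suc kstar))\<^sup>2 * bseq step \<mu> \<sigma> b0 (Suc kstar) + 192 * real m * \<sigma> / \<mu>\<^sup>2"
      unfolding Km by (rule bseq_phase2[OF st2 mu s0])
    define k where "k = real kstar"
    have k1: "(k + 1)\<^sup>2 * (1 - t) \<le> k\<^sup>2"
    proof -
      have "t * (k + 1)\<^sup>2 \<ge> t * k * (k + 1)"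
        using t0 kpos unfolding k_def by (simp add: power2_eq_square mult_left_mono)
      moreover have "t * k * (k + 1) \<ge> 2 * (k + 1)" using tk kpos unfolding k_def by (intro mult_right_mono) auto
      ultimately have "t * (k + 1)\<^sup>2 \<ge> 2 * k + 1" by simp
      then show ?thesis by (simp add: power2_eq_square algebra_simps)
    qed
    have ex2: "(k + 1)\<^sup>2 * (1 - t) ^ Suc kstar \<le> k\<^sup>2 * exp (- 2)"
    proof -
      have "(k + 1)\<^sup>2 * (1 - t) ^ Suc kstar = ((k + 1)\<^sup>2 * (1 - t)) * (1 - t) ^ kstar" by simp
      also have "\<dots> \<le> k\<^sup>2 * (1 - t) ^ kstar" using k1 t0 by (intro mult_right_mono) auto
      also have "\<dots> \<le> k\<^sup>2 * exp (- 2)" using ex by (intro mult_left_mono) auto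
      finally show ?thesis .
    qed
    have noise2: "(k + 1)\<^sup>2 * (24 * wbar * \<sigma> / \<mu>) \<le> 192 * (k + 1) * \<sigma> / \<mu>\<^sup>2"
    proof -
      have "wbar * (k + 1) \<le> wbar * (r + 2)" using kr2 w0 unfolding k_def by simp
      also have "\<dots> \<le> 8 / \<mu>" using wr wmu' mu by (simp add: algebra_simps field_simps)
      finally have h: "wbar * (k + 1) \<le> 8 / \<mu>" .
      have kp: "k + 1 > 0" using kpos unfolding k_def by simp
      have "(k + 1)\<^sup>2 * (24 * wbar * \<sigma> / \<mu>) = (k + 1) * (24 * \<sigma> / \<mu>) * (wbar * (k + 1))"
        by (simp add: power2_eq_square algebra_simps)
      also have "\<dots> \<le> (k + 1) * (24 * \<sigma> / \<mu>) * (8 / \<mu>)"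
        using h kp s0 mu by (intro mult_left_mono) auto
      also have "\<dots> = 192 * (k + 1) * \<sigma> / \<mu>\<^sup>2" by (simp add: power2_eq_square field_simps)
      finally show ?thesis .
    qed
    have "(real K)\<^sup>2 * bseq step \<mu> \<sigma> b0 K \<le> (k + 1)\<^sup>2 * ((1 - t) ^ Suc kstar * b0 + 24 * wbar * \<sigma> / \<mu>) + 192 * real m * \<sigma> / \<mu>\<^sup>2"
    proof -
      have hk: "real (Suc kstar) = k + 1" unfolding k_def by simp
      have "(k + 1)\<^sup>2 * bseq step \<mu> \<sigma> b0 (Suc kstar) \<le> (k + 1)\<^sup>2 * ((1 - t) ^ Suc kstar * b0 + 24 * wbar * \<sigma> / \<mu>)"
        using P1[of "Suc kstar"] by (intro mult_left_mono) auto
      then show ?thesis using P2[unfolded hk] by linarith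
    qed
    also have "\<dots> = (k + 1)\<^sup>2 * (1 - t) ^ Suc kstar * b0 + (k + 1)\<^sup>2 * (24 * wbar * \<sigma> / \<mu>) + 192 * real m * \<sigma> / \<mu>\<^sup>2"
      by (simp add: algebra_simps)
    also have "\<dots> \<le> k\<^sup>2 * exp (- 2) * b0 + 192 * (k + 1) * \<sigma> / \<mu>\<^sup>2 + 192 * real m * \<sigma> / \<mu>\<^sup>2"
      using ex2 noise2 b0 by (intro add_mono mult_right_mono) auto
    also have "\<dots> = k\<^sup>2 * exp (- 2) * b0 + 192 * real K * \<sigma> / \<mu>\<^sup>2"
      unfolding Km k_def by (simp add: add_divide_distrib algebra_simps)
    finally have main: "(real K)\<^sup>2 * bseq step \<mu> \<sigma> b0 K \<le> k\<^sup>2 * exp (- 2) * b0 + 192 * real K * \<sigma> / \<mu>\<^sup>2" .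
    have Kp: "real K > 0" using Km by simp
    have "bseq step \<mu> \<sigma> b0 K \<le> (k\<^sup>2 * exp (- 2) * b0 + 192 * real K * \<sigma> / \<mu>\<^sup>2) / (real K)\<^sup>2"
      using main Kp by (simp add: field_simps)
    also have "\<dots> = (real kstar / real K)\<^sup>2 / exp 2 * b0 + 192 * \<sigma> / (\<mu>\<^sup>2 * real K)"
      unfolding k_def using Kp mu by (simp add: exp_minus field_simps power2_eq_square)
    finally show ?thesis .
  qed
qed

lemma tail_step_le:
  fixes \<mu> w :: real
  assumes mu: "\<mu> > 0" and w: "w > 0" and ks: "real ks \<ge> 4 / (\<mu> * w)" and k: "k > ks"
  shows "(2 * real k + 1) / (real k + 1)\<^sup>2 * (2 / \<mu>) \<le> w"
proof -
  define x where "x = real k + 1"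
  have x0: "x > 0" unfolding x_def by simp
  have "4 / (\<mu> * w) \<le> x" using ks k unfolding x_def by linarith
  then have h: "4 \<le> x * (\<mu> * w)" using mu w by (simp add: field_simps)
  have e: "2 * real k + 1 = 2 * x - 1" unfolding x_def by simp
  have "(2 * x - 1) / x\<^sup>2 \<le> 2 / x"
    using x0 by (simp add: field_simps power2_eq_square)
  then have "(2 * real k + 1) / x\<^sup>2 \<le> 2 / x" unfolding e .
  then have "(2 * real k + 1) / x\<^sup>2 * (2 / \<mu>) \<le> 2 / x * (2 / \<mu>)"
    using mu by (intro mult_right_mono) auto
  also have "\<dots> \<le> w" using h x0 mu w by (simp add: field_simps)
  finally show ?thesis unfolding x_def .
qed

lemma bseq_nonneg:
  assumes "0 \<le> b0" "0 \<le> \<sigma>" "\<And>k. stp k * \<mu> \<le> 2"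
  shows "0 \<le> bseq stp \<mu> \<sigma> b0 k"
proof (induction k)
  case 0 then show ?case using assms by simp
next
  case (Suc k)
  have "0 \<le> 1 - stp k * \<mu> / 2" using assms(3)[of k] by simp
  then show ?case using Suc.IH assms(2) by simp
qed

lemma pw_ineq:
  fixes a b s w \<mu> \<delta> :: real
  assumes a: "0 \<le> a" and b: "0 \<le> b" and w0: "0 \<le> w" and d: "0 \<le> \<delta>" and mu: "0 \<le> \<mu>"
    and wd: "18 * \<delta> * w \<le> \<mu>" and wm: "w * \<mu> \<le> 1/4"
  shows "((1 - 17/18 * w * \<mu>) * a + 1/2 * b + 4 * w\<^sup>2 * s) + 4 * w\<^sup>2 * (\<delta> * (2 * a + 2 * b) + 2 * s)
         \<le> (1 - w * \<mu> / 2) * (a + b) + 12 * w\<^sup>2 * s"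
proof -
  define q where "q = w * \<mu>"
  define r where "r = w\<^sup>2 * \<delta>"
  have rq: "18 * r \<le> q" unfolding q_def r_def using mult_left_mono[OF wd w0]
    by (simp add: power2_eq_square algebra_simps)
  have ra: "r * a \<le> (q * a) / 18" using mult_right_mono[OF rq a] by simp
  have rb: "r * b \<le> (q * b) / 18" using mult_right_mono[OF rq b] by simp
  have qb: "q * b \<le> b / 4" using mult_right_mono[OF wm b] unfolding q_def by simp
  have lhs: "((1 - 17/18 * w * \<mu>) * a + 1/2 * b + 4 * w\<^sup>2 * s) + 4 * w\<^sup>2 * (\<delta> * (2 * a + 2 * b) + 2 * s)
      = a - 17/18 * (q * a) + b / 2 + 8 * (r * a) + 8 * (r * b) + 12 * (w\<^sup>2 * s)"
    unfolding q_def r_def by (simp add: algebra_simps)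
  have rhs: "(1 - w * \<mu> / 2) * (a + b) + 12 * w\<^sup>2 * s = a + b - (q * a) / 2 - (q * b) / 2 + 12 * (w\<^sup>2 * s)"
    unfolding q_def by (simp add: algebra_simps)
  show ?thesis unfolding lhs rhs using ra rb qb b by linarith
qed

context
  fixes Fs :: "'i::finite \<Rightarrow> 'a::euclidean_space \<Rightarrow> 'a"
    and D :: "(real^'i) measure"
    and xs x0 :: 'a and L \<mu> \<delta> \<sigma>2 :: real
  assumes meas: "\<And>i. Fs i \<in> borel_measurable borel"
    and D: "sampling_distribution D"
    and root: "Fmean Fs xs = 0"
    and lip: "L-lipschitz_on UNIV (Fmean Fs)"
    and mu0: "\<mu> \<ge> 0" and qsm: "quasi_strongly_monotone \<mu> (Fmean Fs) xs"
    and delta: "\<delta> \<ge> 0" and ER: "expected_residual \<delta> D Fs xs"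
    and sig_int: "integrable D (\<lambda>v. (norm (Fv Fs v xs))\<^sup>2)"
    and sig: "\<sigma>2 = (\<integral>v. (norm (Fv Fs v xs))\<^sup>2 \<partial>D)"
begin

lemma one_step:
  fixes stp :: "nat \<Rightarrow> real"
  assumes w0: "0 \<le> stp k" and wL: "stp k * L \<le> 1/4" and wd: "18 * \<delta> * stp k \<le> \<mu>" and wm: "stp k * \<mu> \<le> 1/4"
  shows "speg_R2 D Fs stp stp x0 xs (Suc k)
     \<le> ennreal (1 - stp k * \<mu> / 2) * speg_R2 D Fs stp stp x0 xs k + ennreal (12 * (stp k)\<^sup>2 * \<sigma>2)"
proof -
  let ?P = "PiM (UNIV :: nat set) (\<lambda>_. D)"
  let ?st = "\<lambda>k s. speg_state Fs stp stp x0 s k"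
  define w where "w = stp k"
  have Dp: "prob_space D" and Ds: "sets D = sets borel" using D unfolding sampling_distribution_def by auto
  interpret PP: product_prob_space "\<lambda>_. D" "UNIV :: nat set"
    by (simp add: product_prob_space_def product_prob_space_axioms_def product_sigma_finite_def Dp prob_space_imp_sigma_finite)
  have s0: "\<sigma>2 \<ge> 0" using sig by simp
  have cP: "(\<lambda>\<omega>. \<omega> i) \<in> borel_measurable ?P" for i by (rule coord_meas_D[OF Ds]) simp
  have stm: "(\<lambda>s. fst (?st j s)) \<in> borel_measurable ?P \<and> (\<lambda>s. snd (?st j s)) \<in> borel_measurable ?P" for j
    using speg_meas[OF meas, where k=j and S="\<lambda>s. s" and M="?P"] cP by auto
  define a where "a = (\<lambda>s. (norm (fst (?st k s) - xs))\<^sup>2)"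
  define b where "b = (\<lambda>s. (norm (fst (?st k s) - snd (?st k s)))\<^sup>2)"
  define N where "N = (\<lambda>s. (norm (Fv Fs (s k) (snd (?st k s)) - Fmean Fs (snd (?st k s))))\<^sup>2)"
  have stf: "(\<lambda>s. fst (?st j s)) \<in> borel_measurable ?P" and sts: "(\<lambda>s. snd (?st j s)) \<in> borel_measurable ?P" for j
    using stm by auto
  note stf[measurable] sts[measurable] cP[measurable]
  have Fvm[measurable]: "(\<lambda>s. Fv Fs (f s) (g s)) \<in> borel_measurable M" if "f \<in> borel_measurable M" "g \<in> borel_measurable M" for f g and M :: "'b measure"
    using Fv_meas[OF meas that] .
  have am: "a \<in> borel_measurable ?P" and bm: "b \<in> borel_measurable ?P" unfolding a_def b_def
    by measurable
  have Fmm: "Fmean Fs \<in> borel_measurable borel" unfolding Fmean_def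
    using meas by (intro borel_measurable_scaleR borel_measurable_const borel_measurable_sum) auto
  have f1[measurable]: "(\<lambda>s. Fv Fs (s k) (snd (?st k s))) \<in> borel_measurable ?P" by (rule Fv_meas[OF meas cP sts])
  have f2[measurable]: "(\<lambda>s. Fmean Fs (snd (?st k s))) \<in> borel_measurable ?P"
    using measurable_compose[OF sts Fmm] by (simp add: comp_def)
  have Nm: "N \<in> borel_measurable ?P" unfolding N_def
    by measurable
  have a0: "a s \<ge> 0" "b s \<ge> 0" "N s \<ge> 0" for s unfolding a_def b_def N_def by auto
  \<comment> \<open>Step 1: integrate out the newest sample\<close>
  define A' where "A' = UNIV - {Suc k}"
  define X where "X = (\<lambda>z. fst (?st k z))"
  define Y where "Y = (\<lambda>z. X z - w *\<^sub>R Fv Fs (z k) (snd (?st k z)))"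
  define G where "G = (\<lambda>z v. ennreal ((norm (X z - w *\<^sub>R Fv Fs v (Y z) - xs))\<^sup>2
                          + (norm (X z - w *\<^sub>R Fv Fs v (Y z) - Y z))\<^sup>2))"
  have loc1: "?st k (restrict s A') = ?st k s" for s
    by (rule speg_local) (auto simp: A'_def)
  have loc1': "restrict s A' k = s k" for s by (simp add: A'_def)
  have GX: "G (restrict s A') = G s" for s
    unfolding G_def X_def Y_def loc1 loc1' ..
  have R1: "speg_R2 D Fs stp stp x0 xs (Suc k) = (\<integral>\<^sup>+ s. G (restrict s A') (s (Suc k)) \<partial>?P)"
  proof -
    have "ennreal ((norm (fst (?st (Suc k) s) - xs))\<^sup>2 + (norm (fst (?st (Suc k) s) - snd (?st (Suc k) s)))\<^sup>2) = G s (s (Suc k))" for s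
      unfolding G_def X_def Y_def w_def by (simp only: speg_Suc Let_def fst_conv snd_conv)
    then show ?thesis unfolding speg_R2_def GX by simp
  qed
  have Gm: "(\<lambda>z. G (fst z) (snd z)) \<in> borel_measurable (PiM A' (\<lambda>_. D) \<Otimes>\<^sub>M D)"
  proof -
    let ?M = "PiM A' (\<lambda>_. D) \<Otimes>\<^sub>M D"
    have ci: "(\<lambda>z. fst z i) \<in> borel_measurable ?M" if "i \<le> k" for i
      using measurable_compose[OF measurable_fst coord_meas_D[OF Ds, of i A']] that
      by (simp add: A'_def comp_def)
    have sm: "(\<lambda>z. fst (?st k (fst z))) \<in> borel_measurable ?M \<and> (\<lambda>z. snd (?st k (fst z))) \<in> borel_measurable ?M"
      using speg_meas[OF meas, where k=k and S="fst" and M="?M"] ci by auto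
    have sn: "snd \<in> borel_measurable ?M"
      using measurable_snd[of "PiM A' (\<lambda>_. D)" D] by (simp add: measurable_cong_sets[OF refl Ds])
    have ck: "(\<lambda>z. fst z k) \<in> borel_measurable ?M" by (rule ci) simp
    note sm[THEN conjunct1, measurable] sm[THEN conjunct2, measurable] sn[measurable] ck[measurable]
    show ?thesis unfolding G_def X_def Y_def by measurable
  qed
  have R1': "speg_R2 D Fs stp stp x0 xs (Suc k) = (\<integral>\<^sup>+ s. \<integral>\<^sup>+ v. G s v \<partial>D \<partial>?P)"
    unfolding R1 indep_split[OF Dp Gm[unfolded A'_def], folded A'_def] by (simp only: GX)
  have inner: "(\<integral>\<^sup>+ v. G s v \<partial>D) \<le> ennreal ((1 - 17/18 * w * \<mu>) * a s + 1/2 * b s + 4 * w\<^sup>2 * \<sigma>2) + ennreal (4 * w\<^sup>2) * ennreal (N s)" for s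
  proof -
    have "(\<integral>\<^sup>+ v. G s v \<partial>D) \<le> ennreal ((1 - 17/18 * w * \<mu>) * a s + 1/2 * b s + 4 * w\<^sup>2 * N s + 4 * w\<^sup>2 * \<sigma>2)"
      unfolding G_def X_def Y_def a_def b_def N_def
      by (rule inner_step[OF meas D root delta ER sig_int sig lip qsm mu0]) (use w0 wL wd wm in \<open>auto simp: w_def\<close>)
    also have "\<dots> = ennreal ((1 - 17/18 * w * \<mu>) * a s + 1/2 * b s + 4 * w\<^sup>2 * \<sigma>2) + ennreal (4 * w\<^sup>2) * ennreal (N s)"
    proof -
      have "17/18 * w * \<mu> \<le> 1" using wm by (simp add: w_def mult.commute)
      then have "(1 - 17/18 * w * \<mu>) * a s \<ge> 0" using a0 by simp
      then have T0: "(1 - 17/18 * w * \<mu>) * a s + 1/2 * b s + 4 * w\<^sup>2 * \<sigma>2 \<ge> 0" using a0 s0 by simp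
      have "(1 - 17/18 * w * \<mu>) * a s + 1/2 * b s + 4 * w\<^sup>2 * N s + 4 * w\<^sup>2 * \<sigma>2
         = ((1 - 17/18 * w * \<mu>) * a s + 1/2 * b s + 4 * w\<^sup>2 * \<sigma>2) + (4 * w\<^sup>2) * N s" (is "_ = ?T + _") by simp
      moreover have "ennreal (?T + (4 * w\<^sup>2) * N s) = ennreal ?T + ennreal (4 * w\<^sup>2) * ennreal (N s)"
        using ennreal_plus[OF T0, of "(4 * w\<^sup>2) * N s"] ennreal_mult[of "4 * w\<^sup>2" "N s"] a0 by simp
      ultimately show ?thesis by (simp only:)
    qed
    finally show ?thesis .
  qed
  define T where "T = (\<lambda>s. (1 - 17/18 * w * \<mu>) * a s + 1/2 * b s + 4 * w\<^sup>2 * \<sigma>2)"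
  have cw: "17/18 * w * \<mu> \<le> 1" using wm by (simp add: w_def mult.commute)
  have T0: "T s \<ge> 0" for s unfolding T_def using a0[of s] s0 cw by simp
  note am[measurable] bm[measurable] Nm[measurable]
  have Tm[measurable]: "T \<in> borel_measurable ?P" unfolding T_def by measurable
  \<comment> \<open>Step 2: the noise of the previous sample\<close>
  define A2 where "A2 = UNIV - {k}"
  define H where "H = (\<lambda>z v. ennreal ((norm (Fv Fs v (snd (?st k z)) - Fmean Fs (snd (?st k z))))\<^sup>2))"
  have loc2: "snd (?st k (restrict s A2)) = snd (?st k s)" for s
    by (rule speg_local_snd) (auto simp: A2_def)
  have HX: "H (restrict s A2) = H s" for s unfolding H_def loc2 ..
  have Hm: "(\<lambda>z. H (fst z) (snd z)) \<in> borel_measurable (PiM A2 (\<lambda>_. D) \<Otimes>\<^sub>M D)"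
  proof -
    let ?M = "PiM A2 (\<lambda>_. D) \<Otimes>\<^sub>M D"
    have ci: "(\<lambda>z. fst z i) \<in> borel_measurable ?M" for i
    proof (cases "i = k")
      case True
      then show ?thesis using measurable_compose[OF measurable_fst coord_meas_out[of k A2 "\<lambda>_. D"]]
        by (simp add: A2_def comp_def)
    next
      case False
      then show ?thesis using measurable_compose[OF measurable_fst coord_meas_D[OF Ds, of i A2]]
        by (simp add: A2_def comp_def)
    qed
    have sm: "(\<lambda>z. snd (?st k (fst z))) \<in> borel_measurable ?M"
      using speg_meas[OF meas, where k=k and S="fst" and M="?M"] ci by auto
    have sn: "snd \<in> borel_measurable ?M"
      using measurable_snd[of "PiM A2 (\<lambda>_. D)" D] by (simp add: measurable_cong_sets[OF refl Ds])
    have fm: "(\<lambda>z. Fmean Fs (snd (?st k (fst z)))) \<in> borel_measurable ?M"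
      using measurable_compose[OF sm Fmm] by (simp add: comp_def)
    note sm[measurable] sn[measurable] fm[measurable]
    show ?thesis unfolding H_def by measurable
  qed
  have NH: "ennreal (N s) = H (restrict s A2) (s k)" for s by (simp only: HX) (simp add: H_def N_def)
  have NB: "(\<integral>\<^sup>+ s. ennreal (N s) \<partial>?P) \<le> (\<integral>\<^sup>+ s. ennreal (\<delta> * (2 * a s + 2 * b s) + 2 * \<sigma>2) \<partial>?P)"
  proof -
    have "(\<integral>\<^sup>+ s. ennreal (N s) \<partial>?P) = (\<integral>\<^sup>+ s. \<integral>\<^sup>+ v. H (restrict s A2) v \<partial>D \<partial>?P)"
      unfolding NH indep_split[OF Dp Hm[unfolded A2_def], folded A2_def] ..
    also have "\<dots> \<le> (\<integral>\<^sup>+ s. ennreal (\<delta> * (2 * a s + 2 * b s) + 2 * \<sigma>2) \<partial>?P)"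
    proof (rule nn_integral_mono)
      fix s
      let ?h = "snd (?st k s)"
      have "(\<integral>\<^sup>+ v. H (restrict s A2) v \<partial>D) \<le> ennreal (\<delta> * (norm (?h - xs))\<^sup>2 + 2 * \<sigma>2)"
        unfolding H_def loc2 by (rule noise_bound[OF meas D root delta ER sig_int sig])
      also have "\<dots> \<le> ennreal (\<delta> * (2 * a s + 2 * b s) + 2 * \<sigma>2)"
      proof (rule ennreal_leI)
        have "?h - xs = (fst (?st k s) - xs) + (- (fst (?st k s) - ?h))" by simp
        then have "(norm (?h - xs))\<^sup>2 \<le> 2 * a s + 2 * b s"
          unfolding a_def b_def using sq_tri by (metis norm_minus_cancel)
        then show "\<delta> * (norm (?h - xs))\<^sup>2 + 2 * \<sigma>2 \<le> \<delta> * (2 * a s + 2 * b s) + 2 * \<sigma>2"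
          using delta by (simp add: mult_left_mono)
      qed
      finally show "(\<integral>\<^sup>+ v. H (restrict s A2) v \<partial>D) \<le> ennreal (\<delta> * (2 * a s + 2 * b s) + 2 * \<sigma>2)" .
    qed
    finally show ?thesis .
  qed
  have "speg_R2 D Fs stp stp x0 xs (Suc k) \<le> (\<integral>\<^sup>+ s. (ennreal (T s) + ennreal (4 * w\<^sup>2) * ennreal (N s)) \<partial>?P)"
    unfolding R1' by (rule nn_integral_mono) (use inner in \<open>simp add: T_def\<close>)
  also have "\<dots> = (\<integral>\<^sup>+ s. ennreal (T s) \<partial>?P) + ennreal (4 * w\<^sup>2) * (\<integral>\<^sup>+ s. ennreal (N s) \<partial>?P)"
    by (simp add: nn_integral_add nn_integral_cmult)
  also have "\<dots> \<le> (\<integral>\<^sup>+ s. ennreal (T s) \<partial>?P) + ennreal (4 * w\<^sup>2) * (\<integral>\<^sup>+ s. ennreal (\<delta> * (2 * a s + 2 * b s) + 2 * \<sigma>2) \<partial>?P)"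
    using NB by (intro add_mono mult_left_mono) auto
  also have "\<dots> = (\<integral>\<^sup>+ s. (ennreal (T s) + ennreal (4 * w\<^sup>2) * ennreal (\<delta> * (2 * a s + 2 * b s) + 2 * \<sigma>2)) \<partial>?P)"
    by (simp add: nn_integral_add nn_integral_cmult)
  also have "\<dots> \<le> (\<integral>\<^sup>+ s. (ennreal (1 - w * \<mu> / 2) * ennreal (a s + b s) + ennreal (12 * w\<^sup>2 * \<sigma>2)) \<partial>?P)"
  proof (rule nn_integral_mono)
    fix s
    have p1: "\<delta> * (2 * a s + 2 * b s) + 2 * \<sigma>2 \<ge> 0" using a0[of s] delta s0 by simp
    have p2: "1 - w * \<mu> / 2 \<ge> 0" using wm by (simp add: w_def)
    have "ennreal (T s) + ennreal (4 * w\<^sup>2) * ennreal (\<delta> * (2 * a s + 2 * b s) + 2 * \<sigma>2)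
        = ennreal (T s + 4 * w\<^sup>2 * (\<delta> * (2 * a s + 2 * b s) + 2 * \<sigma>2))"
      using T0[of s] p1 by (simp add: ennreal_plus ennreal_mult)
    also have "\<dots> \<le> ennreal ((1 - w * \<mu> / 2) * (a s + b s) + 12 * w\<^sup>2 * \<sigma>2)"
      unfolding T_def
      by (rule ennreal_leI, rule pw_ineq) (use a0 delta mu0 wd wm w0 in \<open>auto simp: w_def\<close>)
    also have "\<dots> = ennreal (1 - w * \<mu> / 2) * ennreal (a s + b s) + ennreal (12 * w\<^sup>2 * \<sigma>2)"
      using p2 a0[of s] s0 by (simp add: ennreal_plus ennreal_mult)
    finally show "ennreal (T s) + ennreal (4 * w\<^sup>2) * ennreal (\<delta> * (2 * a s + 2 * b s) + 2 * \<sigma>2)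
        \<le> ennreal (1 - w * \<mu> / 2) * ennreal (a s + b s) + ennreal (12 * w\<^sup>2 * \<sigma>2)" .
  qed
  also have "\<dots> = ennreal (1 - w * \<mu> / 2) * (\<integral>\<^sup>+ s. ennreal (a s + b s) \<partial>?P) + ennreal (12 * w\<^sup>2 * \<sigma>2)"
    by (simp add: nn_integral_add nn_integral_cmult PP.P.emeasure_space_1)
  also have "(\<integral>\<^sup>+ s. ennreal (a s + b s) \<partial>?P) = speg_R2 D Fs stp stp x0 xs k"
    unfolding speg_R2_def a_def b_def ..
  finally show ?thesis unfolding w_def .
qed

lemma R2_zero: "speg_R2 D Fs stp stp x0 xs 0 = ennreal ((norm (x0 - xs))\<^sup>2)"
proof -
  have Dp: "prob_space D" using D unfolding sampling_distribution_def by auto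
  interpret PP: product_prob_space "\<lambda>_. D" "UNIV :: nat set"
    by (simp add: product_prob_space_def product_prob_space_axioms_def product_sigma_finite_def Dp prob_space_imp_sigma_finite)
  show ?thesis unfolding speg_R2_def by (simp add: PP.P.emeasure_space_1)
qed

lemma R2_bseq:
  fixes stp :: "nat \<Rightarrow> real"
  assumes c: "\<And>k. 0 \<le> stp k \<and> stp k * L \<le> 1/4 \<and> 18 * \<delta> * stp k \<le> \<mu> \<and> stp k * \<mu> \<le> 1/4"
  shows "speg_R2 D Fs stp stp x0 xs k \<le> ennreal (bseq stp \<mu> \<sigma>2 ((norm (x0 - xs))\<^sup>2) k)"
proof (induction k)
  case 0 then show ?case by (simp add: R2_zero)
next
  case (Suc k)
  have s0: "\<sigma>2 \<ge> 0" using sig by simp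
  have bn: "0 \<le> bseq stp \<mu> \<sigma>2 ((norm (x0 - xs))\<^sup>2) k"
  proof (rule bseq_nonneg)
    fix j have "stp j * \<mu> \<le> 1/4" using c[of j] by blast
    then show "stp j * \<mu> \<le> 2" by linarith
  qed (use s0 in auto)
  have q0: "0 \<le> 1 - stp k * \<mu> / 2" using c[of k] by simp
  have "speg_R2 D Fs stp stp x0 xs (Suc k) \<le> ennreal (1 - stp k * \<mu> / 2) * speg_R2 D Fs stp stp x0 xs k + ennreal (12 * (stp k)\<^sup>2 * \<sigma>2)"
    using c[of k] by (intro one_step) auto
  also have "\<dots> \<le> ennreal (1 - stp k * \<mu> / 2) * ennreal (bseq stp \<mu> \<sigma>2 ((norm (x0 - xs))\<^sup>2) k) + ennreal (12 * (stp k)\<^sup>2 * \<sigma>2)"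
    using Suc.IH by (intro add_mono mult_left_mono) auto
  also have "\<dots> = ennreal (bseq stp \<mu> \<sigma>2 ((norm (x0 - xs))\<^sup>2) (Suc k))"
  proof -
    let ?q = "1 - stp k * \<mu> / 2" and ?b = "bseq stp \<mu> \<sigma>2 ((norm (x0 - xs))\<^sup>2) k" and ?c = "12 * (stp k)\<^sup>2 * \<sigma>2"
    have c0: "0 \<le> ?c" using s0 by simp
    have "ennreal ?q * ennreal ?b = ennreal (?q * ?b)" by (rule ennreal_mult[symmetric, OF q0 bn])
    moreover have "ennreal (?q * ?b) + ennreal ?c = ennreal (?q * ?b + ?c)"
      by (rule ennreal_plus[symmetric]) (use q0 bn c0 in auto)
    ultimately show ?thesis by simp
  qed
  finally show ?case .
qed

end

theorem theorem4p3:
  fixes Fs :: "'i::finite \<Rightarrow> 'a::euclidean_space \<Rightarrow> 'a"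
    and D :: "(real^'i) measure"
    and xs x0 :: 'a and L \<mu> \<delta> \<sigma>2 :: real
  assumes meas: "\<And>i. Fs i \<in> borel_measurable borel"
    and D: "sampling_distribution D"
    and root: "Fmean Fs xs = 0"
    and lip: "L-lipschitz_on UNIV (Fmean Fs)"
    and mu: "\<mu> > 0" and qsm: "quasi_strongly_monotone \<mu> (Fmean Fs) xs"
    and delta: "\<delta> > 0" and ER: "expected_residual \<delta> D Fs xs"
    and sig_int: "integrable D (\<lambda>v. (norm (Fv Fs v xs))\<^sup>2)"
    and sig: "\<sigma>2 = (\<integral>v. (norm (Fv Fs v xs))\<^sup>2 \<partial>D)"
  defines "wbar \<equiv> min (1 / (4 * L)) (\<mu> / (18 * \<delta>))"
  defines "kstar \<equiv> nat \<lceil>4 / (\<mu> * wbar)\<rceil>"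
  defines "step \<equiv> (\<lambda>k::nat. if k \<le> kstar then wbar
                    else (2 * real k + 1) / (real k + 1)\<^sup>2 * (2 / \<mu>))"
  assumes K: "K \<ge> kstar"
  shows "speg_R2 D Fs step step x0 xs K
           \<le> ennreal ((real kstar / real K)\<^sup>2 / exp 2) * speg_R2 D Fs step step x0 xs 0
             + ennreal (192 * \<sigma>2 / (\<mu>\<^sup>2 * real K))"
proof -
  have mu0: "\<mu> \<ge> 0" and delta0: "\<delta> \<ge> 0" using mu delta by auto
  have s0: "\<sigma>2 \<ge> 0" using sig by simp
  have Lmu: "\<mu> \<le> L"
  proof -
    obtain e :: 'a where e: "e \<in> Basis" using nonempty_Basis by blast
    have ne: "norm e = 1" using e by simp
    have "\<mu> = \<mu> * (norm ((xs + e) - xs))\<^sup>2" using ne by simp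
    also have "\<dots> \<le> inner (Fmean Fs (xs + e)) ((xs + e) - xs)"
      using qsm unfolding quasi_strongly_monotone_def by blast
    also have "\<dots> \<le> norm (Fmean Fs (xs + e)) * norm ((xs + e) - xs)" by (rule norm_cauchy_schwarz)
    also have "\<dots> = dist (Fmean Fs (xs + e)) (Fmean Fs xs)" using ne root by (simp add: dist_norm)
    also have "\<dots> \<le> L * dist (xs + e) xs" by (rule lipschitz_onD[OF lip]) auto
    also have "\<dots> = L" using ne by (simp add: dist_norm)
    finally show ?thesis .
  qed
  have L0: "L > 0" using mu Lmu by simp
  have w0: "wbar > 0" unfolding wbar_def using L0 mu delta by simp
  have wL: "wbar * L \<le> 1/4"
  proof -
    have "wbar \<le> 1 / (4 * L)" unfolding wbar_def by simp
    then have "wbar * L \<le> 1 / (4 * L) * L" using L0 by (intro mult_right_mono) auto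
    then show ?thesis using L0 by simp
  qed
  have wd: "18 * \<delta> * wbar \<le> \<mu>"
  proof -
    have "wbar \<le> \<mu> / (18 * \<delta>)" unfolding wbar_def by simp
    then show ?thesis using delta by (simp add: field_simps)
  qed
  have ks: "real kstar \<ge> 4 / (\<mu> * wbar)" unfolding kstar_def by linarith
  have sle: "0 \<le> step k \<and> step k \<le> wbar" for k
  proof (cases "k \<le> kstar")
    case True then show ?thesis using w0 unfolding step_def by simp
  next
    case False
    then have "step k = (2 * real k + 1) / (real k + 1)\<^sup>2 * (2 / \<mu>)" unfolding step_def by simp
    moreover have "(2 * real k + 1) / (real k + 1)\<^sup>2 * (2 / \<mu>) \<le> wbar"
      using tail_step_le[OF mu w0 ks] False by simp
    moreover have "0 \<le> (2 * real k + 1) / (real k + 1)\<^sup>2 * (2 / \<mu>)" using mu by simp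
    ultimately show ?thesis by simp
  qed
  have c: "0 \<le> step k \<and> step k * L \<le> 1/4 \<and> 18 * \<delta> * step k \<le> \<mu> \<and> step k * \<mu> \<le> 1/4" for k
  proof -
    have a1: "0 \<le> step k" "step k \<le> wbar" using sle[of k] by auto
    have "step k * L \<le> wbar * L" using a1 L0 by (intro mult_right_mono) auto
    then have b1: "step k * L \<le> 1/4" using wL by simp
    have "18 * \<delta> * step k \<le> 18 * \<delta> * wbar" using a1 delta by (intro mult_left_mono) auto
    then have b2: "18 * \<delta> * step k \<le> \<mu>" using wd by simp
    have "step k * \<mu> \<le> step k * L" using a1 Lmu by (intro mult_left_mono) auto
    then have b3: "step k * \<mu> \<le> 1/4" using b1 by simp
    show ?thesis using a1 b1 b2 b3 by simp
  qed
  let ?b0 = "(norm (x0 - xs))\<^sup>2"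
  have b0nn: "0 \<le> ?b0" by simp
  have "speg_R2 D Fs step step x0 xs K \<le> ennreal (bseq step \<mu> \<sigma>2 ?b0 K)"
    by (rule R2_bseq[OF meas D root lip mu0 qsm delta0 ER sig_int sig c])
  also have "\<dots> \<le> ennreal ((real kstar / real K)\<^sup>2 / exp 2 * ?b0 + 192 * \<sigma>2 / (\<mu>\<^sup>2 * real K))"
  proof (rule ennreal_leI)
    show "bseq step \<mu> \<sigma>2 ?b0 K \<le> (real kstar / real K)\<^sup>2 / exp 2 * ?b0 + 192 * \<sigma>2 / (\<mu>\<^sup>2 * real K)"
      using bseq_final[OF mu delta Lmu s0 b0nn K[unfolded kstar_def wbar_def]]
      unfolding step_def kstar_def wbar_def .
  qed
  also have "\<dots> = ennreal ((real kstar / real K)\<^sup>2 / exp 2) * ennreal ?b0 + ennreal (192 * \<sigma>2 / (\<mu>\<^sup>2 * real K))"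
  proof -
    let ?c1 = "(real kstar / real K)\<^sup>2 / exp 2" and ?c2 = "192 * \<sigma>2 / (\<mu>\<^sup>2 * real K)"
    have c1: "0 \<le> ?c1" by simp
    have c2: "0 \<le> ?c2" using s0 mu by simp
    have "ennreal ?c1 * ennreal ?b0 = ennreal (?c1 * ?b0)" by (rule ennreal_mult[symmetric, OF c1 b0nn])
    moreover have "ennreal (?c1 * ?b0) + ennreal ?c2 = ennreal (?c1 * ?b0 + ?c2)"
      by (rule ennreal_plus[symmetric]) (use c1 b0nn c2 in auto)
    ultimately show ?thesis by simp
  qed
  also have "ennreal ?b0 = speg_R2 D Fs step step x0 xs 0"
    by (rule R2_zero[OF meas D root lip mu0 qsm delta0 ER sig_int sig, symmetric])
  finally show ?thesis .
qed

end
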